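(* Let $A=(a(x),dF(x))$ and $B=(b(x),dF(x))$ be games. Then $h(p)=1/\int\frac{1}{pa(x)+(1-p)b(x)}\,dF(x)$ is concave on $[0,1]$.
   Context: A game is a pair $(a(x),dF(x))$ with $dF$ a probability measure on $\mathbb{R}$ and $a\ge0$ measurable with finite positive integral. Convention: $1/(+\infty)=0$. *)

theory Defs
  imports "HOL-Probability.Probability"
begin

definition game :: "real measure \<Rightarrow> (real \<Rightarrow> real) \<Rightarrow> bool" where
  "game F a \<longleftrightarrow> prob_space F \<and> sets F = sets borel \<and>
     a \<in> borel_measurable borel \<and> (\<forall>x. 0 \<le> a x) \<and>
     (\<integral>\<^sup>+ x. ennreal (a x) \<partial>F) < \<infinity> \<and> 0 < (\<integral>\<^sup>+ x. ennreal (a x) \<partial>F)"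

text \<open>h(p) = 1 / \<integral> 1/(p a + (1-p) b) dF, computed in ennreal:
  1/0 = \<infinity> for the integrand, and 1/\<infinity> = 0 for the outer reciprocal.\<close>
definition hfun :: "real measure \<Rightarrow> (real \<Rightarrow> real) \<Rightarrow> (real \<Rightarrow> real) \<Rightarrow> real \<Rightarrow> real" where
  "hfun F a b p = enn2real (inverse
     (\<integral>\<^sup>+ x. inverse (ennreal (p * a x + (1 - p) * b x)) \<partial>F))"

end

theory Submission
  imports Defs
begin

lemma real_ineq:
  fixes u v f g A B :: real
  assumes "u \<ge> 0" "v \<ge> 0" "u + v = 1" "f \<ge> 0" "g \<ge> 0" "A \<ge> 0" "B \<ge> 0"
    "f = 0 \<Longrightarrow> u  *  A = 0" "g = 0 \<Longrightarrow> v  *  B = 0"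
  shows "(u * A + v * B)^2 \<le> (u * f + v * g)  *  (u * A^2/f + v * B^2/g)"
proof (cases "f = 0")
  case True
  then have "u * A = 0" using assms by auto
  then show ?thesis using True assms
    by (cases "g = 0") (auto simp: power2_eq_square field_simps)
next
  case f: False
  show ?thesis
  proof (cases "g = 0")
    case True
    then have "v * B = 0" using assms by auto
    then show ?thesis using True f assms by (auto simp: power2_eq_square field_simps)
  next
    case False
    then have fp: "f > 0" "g > 0" using f assms by auto
    have key: "2 * A * B * f * g \<le> A^2 * g * g + B^2 * f * f"
    proof -
      have "0 \<le> (A * g - B * f)^2" by simp
      then show ?thesis by (simp add: power2_eq_square algebra_simps)
    qed
      thm key
    have "(u * A + v * B)^2  *  (f * g) \<le> (u * f + v * g)  *  (u * A^2 * g + v * B^2 * f)"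
    proof -
      have "u * v * (2 * A * B * f * g) \<le> u * v * (A^2 * g * g + B^2 * f * f)"
        using key assms by (intro mult_left_mono) auto
      then show ?thesis by (simp add: power2_eq_square algebra_simps)
    qed
    then show ?thesis using fp by (simp add: field_simps)
  qed
qed
lemma ennreal_cmult_inv:
  fixes c f :: real
  assumes "c \<ge> 0" "f \<ge> 0" "f > 0 \<or> c = 0"
  shows "ennreal c * inverse (ennreal f) = ennreal (c / f)"
  using assms
proof (cases "f > 0")
  case True
  then show ?thesis using assms
    by (simp add: inverse_ennreal ennreal_mult'' divide_inverse)
qed auto

lemma pointwise:
  fixes u v f g A B :: real
  assumes "u \<ge> 0" "v \<ge> 0" "u + v = 1" "f \<ge> 0" "g \<ge> 0" "A \<ge> 0" "B \<ge> 0"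
    "u * A + v * B > 0"
  shows "ennreal ((u * A + v * B)^2) * inverse (ennreal (u * f + v * g))
     \<le> ennreal (u * A^2) * inverse (ennreal f) + ennreal (v * B^2) * inverse (ennreal g)"
proof (cases "(f = 0 \<and> u * A > 0) \<or> (g = 0 \<and> v * B > 0)")
  case True
  then show ?thesis
  proof
    assume h: "f = 0 \<and> u * A > 0"
    then have "u > 0" "A > 0" using assms by (auto simp: zero_less_mult_iff)
    then have "u * A^2 > 0" by simp
    then have "ennreal (u * A^2) * inverse (ennreal f) = top" using h \<open>u > 0\<close> \<open>A > 0\<close> by (simp add: ennreal_mult_top)
    then show ?thesis by simp
  next
    assume h: "g = 0 \<and> v * B > 0"
    then have "v > 0" "B > 0" using assms by (auto simp: zero_less_mult_iff)
    then have "v * B^2 > 0" by simp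
    then have "ennreal (v * B^2) * inverse (ennreal g) = top" using h \<open>v > 0\<close> \<open>B > 0\<close> by (simp add: ennreal_mult_top)
    then show ?thesis by simp
  qed
next
  case False
  have "u * A \<ge> 0" "v * B \<ge> 0" using assms by auto
  then have f0: "f = 0 \<Longrightarrow> u * A = 0" and g0: "g = 0 \<Longrightarrow> v * B = 0" using False by auto
  have pos: "u * f + v * g > 0"
  proof (rule ccontr)
    assume "\<not> u * f + v * g > 0"
    moreover have "u * f \<ge> 0" "v * g \<ge> 0" using assms by auto
    ultimately have "u * f = 0" "v * g = 0" by linarith+
    then have "u * A = 0" "v * B = 0" using f0 g0 by auto
    then show False using assms by auto
  qed
  have e1: "ennreal (u * A^2) * inverse (ennreal f) = ennreal (u * A^2 / f)"
    using f0 assms by (intro ennreal_cmult_inv) auto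
  have e2: "ennreal (v * B^2) * inverse (ennreal g) = ennreal (v * B^2 / g)"
    using g0 assms by (intro ennreal_cmult_inv) auto
  have e0: "ennreal ((u * A + v * B)^2) * inverse (ennreal (u * f + v * g))
      = ennreal ((u * A + v * B)^2 / (u * f + v * g))"
    using pos by (intro ennreal_cmult_inv) auto
  have r: "(u * A + v * B)^2 / (u * f + v * g) \<le> u * A^2 / f + v * B^2 / g"
    using real_ineq[OF assms(1-7) f0 g0] pos by (simp add: divide_le_eq mult.commute)
  have "u * A^2 / f \<ge> 0" "v * B^2 / g \<ge> 0" using assms by auto
  then show ?thesis unfolding e0 e1 e2 using r
    by (simp add: ennreal_plus[symmetric] del: ennreal_plus)
qed

lemma inv_sq_mult:
  fixes I :: ennreal and c :: real
  assumes "I > 0" "c \<ge> 0"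
  shows "ennreal (c * (enn2real (inverse I))^2) * I = ennreal (c * enn2real (inverse I))"
proof (cases "I = top")
  case True then show ?thesis by simp
next
  case False
  then obtain R where R: "I = ennreal R" "R \<ge> 0" by (cases I) auto
  then have "R > 0" using assms by auto
  then show ?thesis using R assms
    by (simp add: inverse_ennreal ennreal_mult''[symmetric] power2_eq_square field_simps)
qed
lemma integral_pos:
  assumes "prob_space F" "h \<in> borel_measurable F"
  shows "(\<integral>\<^sup>+ x. inverse (ennreal (h x)) \<partial>F) > 0"
proof -
  have m: "(\<lambda>x. inverse (ennreal (h x))) \<in> borel_measurable F" using assms(2) by measurable
  have "\<not> (AE x in F. inverse (ennreal (h x)) = 0)"
  proof
    assume "AE x in F. inverse (ennreal (h x)) = 0"
    then have "AE x in F. False" by simp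
    then show False using assms(1) prob_space.AE_False by blast
  qed
  then show ?thesis using nn_integral_0_iff_AE[OF m] by (simp add: zero_less_iff_neq_zero)
qed

theorem lemmaD10:
  fixes F :: "real measure" and a b :: "real \<Rightarrow> real"
  assumes "game F a" and "game F b"
  shows "concave_on {0..1} (hfun F a b)"
proof -
  have key: "u * hfun F a b p + v * hfun F a b q \<le> hfun F a b (u *\<^sub>R p + v *\<^sub>R q)"
    if p: "p \<in> {0..1}" and q: "q \<in> {0..1}" and u: "0 \<le> u" and v: "0 \<le> v" and uv: "u + v = 1"
    for p q u v :: real
  proof -
  have P: "prob_space F" and sF: "sets F = sets borel"
    and am: "a \<in> borel_measurable borel" and bm: "b \<in> borel_measurable borel"
    and a0: "\<And>x. 0 \<le> a x" and b0: "\<And>x. 0 \<le> b x"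
    using assms unfolding game_def by auto
  note am[measurable] bm[measurable]
  have mF: "\<And>h. h \<in> borel_measurable borel \<Longrightarrow> h \<in> borel_measurable F"
    using sF measurable_cong_sets by blast
  define fp where "fp x = p * a x + (1 - p) * b x" for x
  define fq where "fq x = q * a x + (1 - q) * b x" for x
  define r where "r = u * p + v * q"
  have fp0: "fp x \<ge> 0" for x using p a0 b0 unfolding fp_def by auto
  have fq0: "fq x \<ge> 0" for x using q a0 b0 unfolding fq_def by auto
  have fpm: "fp \<in> borel_measurable F" unfolding fp_def using am bm by (intro mF) measurable
  have fqm: "fq \<in> borel_measurable F" unfolding fq_def using am bm by (intro mF) measurable
  note fpm[measurable] fqm[measurable]
  have fr: "r * a x + (1 - r) * b x = u * fp x + v * fq x" for x
  proof -
    have "b x = (u + v) * b x" using uv by simp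
    then show ?thesis unfolding r_def fp_def fq_def by (simp add: algebra_simps)
  qed
  define Ip where "Ip = (\<integral>\<^sup>+ x. inverse (ennreal (fp x)) \<partial>F)"
  define Iq where "Iq = (\<integral>\<^sup>+ x. inverse (ennreal (fq x)) \<partial>F)"
  define Ir where "Ir = (\<integral>\<^sup>+ x. inverse (ennreal (u * fp x + v * fq x)) \<partial>F)"
  have Ip0: "Ip > 0" unfolding Ip_def by (rule integral_pos[OF P fpm])
  have Iq0: "Iq > 0" unfolding Iq_def by (rule integral_pos[OF P fqm])
  have Ir0: "Ir > 0" unfolding Ir_def using fpm fqm by (intro integral_pos[OF P]) measurable
  define A where "A = enn2real (inverse Ip)"
  define B where "B = enn2real (inverse Iq)"
  have hp: "hfun F a b p = A" unfolding A_def Ip_def hfun_def fp_def ..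
  have hq: "hfun F a b q = B" unfolding B_def Iq_def hfun_def fq_def ..
  have hr: "hfun F a b (u *\<^sub>R p + v *\<^sub>R q) = enn2real (inverse Ir)"
    unfolding Ir_def hfun_def using fr r_def by simp
  have A0: "A \<ge> 0" and B0: "B \<ge> 0" unfolding A_def B_def by auto
  define S where "S = u * A + v * B"
  show "u * hfun F a b p + v * hfun F a b q \<le> hfun F a b (u *\<^sub>R p + v *\<^sub>R q)"
  proof (cases "S > 0")
    case False
    then have "S \<le> 0" by simp
    moreover have "enn2real (inverse Ir) \<ge> 0" by simp
    ultimately show ?thesis unfolding hp hq hr S_def by linarith
  next
    case Spos: True
    have "ennreal (S^2) * Ir = (\<integral>\<^sup>+ x. ennreal (S^2) * inverse (ennreal (u * fp x + v * fq x)) \<partial>F)"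
    proof -
      have mr: "(\<lambda>x. inverse (ennreal (u * fp x + v * fq x))) \<in> borel_measurable F" by measurable
      show ?thesis unfolding Ir_def using nn_integral_cmult[OF mr] by simp
    qed
    also have "\<dots> \<le> (\<integral>\<^sup>+ x. ennreal (u * A^2) * inverse (ennreal (fp x))
        + ennreal (v * B^2) * inverse (ennreal (fq x)) \<partial>F)"
      unfolding S_def
      by (intro nn_integral_mono pointwise u v uv fp0 fq0 A0 B0) (use Spos S_def in simp)
    also have "\<dots> = ennreal (u * A^2) * Ip + ennreal (v * B^2) * Iq"
    proof -
      have m1: "(\<lambda>x. inverse (ennreal (fp x))) \<in> borel_measurable F" by measurable
      have m2: "(\<lambda>x. inverse (ennreal (fq x))) \<in> borel_measurable F" by measurable
      have m3: "(\<lambda>x. ennreal (u * A^2) * inverse (ennreal (fp x))) \<in> borel_measurable F" by measurable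
      have m4: "(\<lambda>x. ennreal (v * B^2) * inverse (ennreal (fq x))) \<in> borel_measurable F" by measurable
      show ?thesis unfolding Ip_def Iq_def
        by (simp add: nn_integral_add[OF m3 m4] nn_integral_cmult[OF m1] nn_integral_cmult[OF m2])
    qed
    also have "\<dots> = ennreal (u * A) + ennreal (v * B)"
      unfolding A_def B_def using inv_sq_mult[OF Ip0 u] inv_sq_mult[OF Iq0 v] by simp
    also have "\<dots> = ennreal S" unfolding S_def using u v A0 B0 by (simp add: ennreal_plus)
    finally have le: "ennreal (S^2) * Ir \<le> ennreal S" .
    have "Ir \<noteq> top"
    proof
      assume "Ir = top"
      then have "ennreal (S^2) * Ir = top" using Spos by (simp add: ennreal_mult_top)
      then show False using le by (simp add: top_unique)
    qed
    then obtain R where R: "Ir = ennreal R" "R \<ge> 0" by (cases Ir) auto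
    then have Rpos: "R > 0" using Ir0 by auto
    have "ennreal (S^2 * R) \<le> ennreal S" using le R by (simp add: ennreal_mult'')
    then have "S^2 * R \<le> S" using Spos by (simp add: ennreal_le_iff2)
    then have "S * R \<le> 1" using Spos by (simp add: power2_eq_square mult.assoc)
    then have "S \<le> 1 / R" using Rpos by (simp add: le_divide_eq)
    moreover have "enn2real (inverse Ir) = 1 / R" using R Rpos by (simp add: inverse_ennreal divide_inverse)
    ultimately show ?thesis unfolding hp hq hr S_def by simp
  qed
  qed
  show ?thesis unfolding concave_on_iff using key by auto
qed

end
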